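(* Let $Q>0$ and $\Gamma>0$. Let $f$ be a positive random variable with a continuous probability density function, and let $I$ be a nonnegative random variable independent of $f$ with $\mathbb{E}[I]=\Gamma$. For $\epsilon_0\in[0,1)$: <ul> <li>Let $\theta_a\ge 0$ satisfy $\Pr\{f/(1+I)<\theta_a\}=\epsilon_0$, and let $\theta_p\ge0$ satisfy $\Pr\{f/(1+\Gamma)<\theta_p\}=\epsilon_0$.</li> <li>Let $\gamma_a$ be determined by $\mathbb{E}[q^a]=Q$, where $q^a=\frac{\gamma_a(1+I)}{f}\mathbf{1}\left(\frac{f}{1+I}\ge\theta_a\right)$.</li> <li>Let $\gamma_p$ be determined by $\mathbb{E}[q^p]=Q$, where $q^p=\frac{\gamma_p(1+\Gamma)}{f}\mathbf{1}\left(\frac{f}{1+\Gamma}\ge\theta_p\right)$.</li> <li>Set $C^{{\rm OUT},a}_{\rm PR,TCI}(\epsilon_0)=\log(1+\gamma_a)$ and $C^{{\rm OUT},p}_{\rm PR,TCI}(\epsilon_0)=\log(1+\gamma_p)$.</li> </ul> Then $C^{{\rm OUT},a}_{\rm PR,TCI}(\epsilon_0)\geq C^{{\rm OUT},p}_{\rm PR,TCI}(\epsilon_0)$ for all $\epsilon_0$.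
   Context: $\mathbf{1}(\cdot)$ denotes the indicator function. Setting: a primary radio (PR) fading link with channel power gain $f$ and unit noise power. $I$ is the interference power caused by a cognitive radio at the PR receiver, independent of $f$. In the average-interference-power (AIP) case $I$ is random with mean $\Gamma$; in the peak-interference-power (PIP) case the interference equals $\Gamma$ always. The PR uses truncated-channel-inversion (TCI) power control with average power $Q$ and outage probability $\epsilon_0$. It transmits only when the effective gain exceeds the threshold, and inverts the channel to achieve constant received SNR $\gamma_a$ (respectively $\gamma_p$). $\log(1+\gamma)$ is the resulting PR outage capacity. *)

theory Defs
  imports "HOL-Probability.Probability"
begin

end

theory Submission
  imports Defs
begin

lemma indep_zero:
  fixes f I :: "'s \<Rightarrow> real" and h :: "real \<Rightarrow> real"
  assumes P: "prob_space M"
    and ind: "prob_space.indep_var M borel f borel I"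
    and hm: "h \<in> borel_measurable borel"
    and hi: "integrable M (\<lambda>\<omega>. h (f \<omega>))"
    and Ii: "integrable M I" and EI: "prob_space.expectation M I = \<Gamma>"
  shows "integrable M (\<lambda>\<omega>. h (f \<omega>) * (I \<omega> - \<Gamma>))"
    and "integral\<^sup>L M (\<lambda>\<omega>. h (f \<omega>) * (I \<omega> - \<Gamma>)) = 0"
proof -
  interpret prob_space M by fact
  have i2: "indep_var borel (\<lambda>\<omega>. h (f \<omega>)) borel (\<lambda>\<omega>. I \<omega> - \<Gamma>)"
  proof -
    have m2: "(\<lambda>y::real. y - \<Gamma>) \<in> borel_measurable borel" by simp
    show ?thesis using indep_var_compose[unfolded comp_def, OF ind hm m2] .
  qed
  have Ii2: "integrable M (\<lambda>\<omega>. I \<omega> - \<Gamma>)" using Ii by simp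
  show "integrable M (\<lambda>\<omega>. h (f \<omega>) * (I \<omega> - \<Gamma>))"
    by (rule indep_var_integrable[OF i2 hi Ii2])
  have "integral\<^sup>L M (\<lambda>\<omega>. I \<omega> - \<Gamma>) = 0"
    using Ii EI prob_space by (simp add: Bochner_Integration.integral_diff)
  then show "integral\<^sup>L M (\<lambda>\<omega>. h (f \<omega>) * (I \<omega> - \<Gamma>)) = 0"
    by (simp add: indep_var_lebesgue_integral[OF i2 hi Ii2])
qed

lemma pw:
  fixes x y c s ta tp :: real
  assumes "x > 0" "y > 0" "c > 0" "ta > 0" "s = 1 / ta"
  shows "y / x * (if ta \<le> x / y then 1 else 0) \<le>
     s * (if ta \<le> x / y then 1 else 0) + c / x * (if tp \<le> x / c then 1 else 0)
     - s * (if tp \<le> x / c then 1 else 0) + (if x > 0 \<and> c / x < s then 1 / x else 0) * (y - c)"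
proof -
  have e1a: "ta \<le> x / y \<longleftrightarrow> ta * y \<le> x" using assms by (simp add: pos_le_divide_eq)
  have e1b: "y / x \<le> 1 / ta \<longleftrightarrow> y * ta \<le> x" using assms by (simp add: field_simps)
  have e1: "ta \<le> x / y \<longleftrightarrow> y / x \<le> s" using e1a e1b assms(5) by (simp add: mult.commute)
  have e2: "(y - c) / x = y / x - c / x" by (simp add: diff_divide_distrib)
  show ?thesis unfolding e1 using e2 assms(1,2,3)
    by (auto simp: divide_simps split: if_splits) 
qed

theorem theorem4p5:
  fixes M :: "'s measure"
    and f I :: "'s \<Rightarrow> real"
    and g :: "real \<Rightarrow> real"
    and Q \<Gamma> \<epsilon>\<^sub>0 \<theta>\<^sub>a \<theta>\<^sub>p \<gamma>\<^sub>a \<gamma>\<^sub>p :: real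
  assumes "prob_space M"
    and "Q > 0" and "\<Gamma> > 0"
    and "AE \<omega> in M. f \<omega> > 0"
    and "\<And>x. g x \<ge> 0" and "continuous_on UNIV g"
    and "distributed M lborel f (\<lambda>x. ennreal (g x))"
    and "I \<in> borel_measurable M"
    and "AE \<omega> in M. I \<omega> \<ge> 0"
    and "prob_space.indep_var M borel f borel I"
    and "integrable M I" and "prob_space.expectation M I = \<Gamma>"
    and "0 \<le> \<epsilon>\<^sub>0" and "\<epsilon>\<^sub>0 < 1"
    and "\<theta>\<^sub>a \<ge> 0"
    and "measure M {\<omega> \<in> space M. f \<omega> / (1 + I \<omega>) < \<theta>\<^sub>a} = \<epsilon>\<^sub>0"
    and "\<theta>\<^sub>p \<ge> 0"
    and "measure M {\<omega> \<in> space M. f \<omega> / (1 + \<Gamma>) < \<theta>\<^sub>p} = \<epsilon>\<^sub>0"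
    and "prob_space.expectation M (\<lambda>\<omega>. \<gamma>\<^sub>a * (1 + I \<omega>) / f \<omega>
           * indicator {\<omega>. f \<omega> / (1 + I \<omega>) \<ge> \<theta>\<^sub>a} \<omega>) = Q"
    and "prob_space.expectation M (\<lambda>\<omega>. \<gamma>\<^sub>p * (1 + \<Gamma>) / f \<omega>
           * indicator {\<omega>. f \<omega> / (1 + \<Gamma>) \<ge> \<theta>\<^sub>p} \<omega>) = Q"
  shows "ln (1 + \<gamma>\<^sub>a) \<ge> ln (1 + \<gamma>\<^sub>p)"
proof -
  interpret P: prob_space M by fact
  have fm: "f \<in> borel_measurable M" using distributed_measurable[OF assms(7)] by simp
  have Im: "I \<in> borel_measurable M" by fact
  define c where "c = 1 + \<Gamma>"
  have cpos: "c > 0" using assms(3) by (simp add: c_def)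
  define Wa where "Wa = (\<lambda>\<omega>. (1 + I \<omega>) / f \<omega> * indicator {\<omega>. f \<omega> / (1 + I \<omega>) \<ge> \<theta>\<^sub>a} \<omega>)"
  define Wp where "Wp = (\<lambda>\<omega>. c / f \<omega> * indicator {\<omega>. f \<omega> / c \<ge> \<theta>\<^sub>p} \<omega>)"
  have "(\<lambda>\<omega>. \<gamma>\<^sub>a * (1 + I \<omega>) / f \<omega> * indicator {\<omega>. f \<omega> / (1 + I \<omega>) \<ge> \<theta>\<^sub>a} \<omega>)
     = (\<lambda>\<omega>. \<gamma>\<^sub>a * Wa \<omega>)" by (auto simp: Wa_def)
  with assms(19) have Ea: "\<gamma>\<^sub>a * integral\<^sup>L M Wa = Q" by simp
  have "(\<lambda>\<omega>. \<gamma>\<^sub>p * (1 + \<Gamma>) / f \<omega> * indicator {\<omega>. f \<omega> / (1 + \<Gamma>) \<ge> \<theta>\<^sub>p} \<omega>)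
     = (\<lambda>\<omega>. \<gamma>\<^sub>p * Wp \<omega>)" by (auto simp: Wp_def c_def)
  with assms(20) have Ep: "\<gamma>\<^sub>p * integral\<^sup>L M Wp = Q" by simp
  have Wai: "integrable M Wa" using Ea assms(2) not_integrable_integral_eq by fastforce
  have Wpi: "integrable M Wp" using Ep assms(2) not_integrable_integral_eq by fastforce
  have "AE \<omega> in M. Wa \<omega> \<ge> 0" using assms(4,9) by eventually_elim (auto simp: Wa_def)
  then have "integral\<^sup>L M Wa \<ge> 0" by (rule integral_nonneg_AE)
  then have EWa: "integral\<^sup>L M Wa > 0" using Ea assms(2) by (cases "integral\<^sup>L M Wa = 0") auto
  have "AE \<omega> in M. Wp \<omega> \<ge> 0" using assms(4) by eventually_elim (use cpos in \<open>auto simp: Wp_def\<close>)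
  then have "integral\<^sup>L M Wp \<ge> 0" by (rule integral_nonneg_AE)
  then have EWp: "integral\<^sup>L M Wp > 0" using Ep assms(2) by (cases "integral\<^sup>L M Wp = 0") auto
  have main: "integral\<^sup>L M Wa \<le> integral\<^sup>L M Wp"
  proof (cases "\<theta>\<^sub>a > 0")
    case True
    define s where "s = 1 / \<theta>\<^sub>a"
    define h where "h = (\<lambda>x::real. if x > 0 \<and> c / x < s then 1 / x else 0)"
    define A where "A = {\<omega>. \<theta>\<^sub>a \<le> f \<omega> / (1 + I \<omega>)}"
    define B where "B = {\<omega>. \<theta>\<^sub>p \<le> f \<omega> / c}"
    define R where "R = (\<lambda>\<omega>. s * indicator A \<omega> + Wp \<omega> - s * indicator B \<omega> + h (f \<omega>) * (I \<omega> - \<Gamma>))"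
    have hm: "h \<in> borel_measurable borel" unfolding h_def by measurable
    have hfm: "(\<lambda>\<omega>. h (f \<omega>)) \<in> borel_measurable M" using measurable_compose[OF fm hm] by (simp add: comp_def)
    have hb: "norm (h x) \<le> s / c" for x
    proof (cases "x > 0 \<and> c / x < s")
      case T: True
      then have "1 / x = (c / x) / c" using cpos by simp
      also have "\<dots> \<le> s / c" using T cpos by (intro divide_right_mono) auto
      finally show ?thesis using T by (simp add: h_def)
    next
      case False
      have "s > 0" using \<open>\<theta>\<^sub>a > 0\<close> by (simp add: s_def)
      then show ?thesis using False cpos by (auto simp: h_def)
    qed
    have hi: "integrable M (\<lambda>\<omega>. h (f \<omega>))"
      by (rule P.integrable_const_bound[where B="s/c"]) (use hb hfm in auto)
    have Di: "integrable M (\<lambda>\<omega>. h (f \<omega>) * (I \<omega> - \<Gamma>))"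
      and D0: "integral\<^sup>L M (\<lambda>\<omega>. h (f \<omega>) * (I \<omega> - \<Gamma>)) = 0"
      using indep_zero[OF assms(1,10) hm hi assms(11,12)] by auto
    have Asets: "A \<inter> space M \<in> sets M" unfolding A_def using fm Im
      by (simp add: Int_commute) measurable
    have Bsets: "B \<inter> space M \<in> sets M" unfolding B_def using fm
      by (simp add: Int_commute) measurable
    have Ai: "integrable M (indicator A :: 's \<Rightarrow> real)"
      using Asets by (simp add: integrable_indicator_iff P.emeasure_finite less_top[symmetric])
    have Bi: "integrable M (indicator B :: 's \<Rightarrow> real)"
      using Bsets by (simp add: integrable_indicator_iff P.emeasure_finite less_top[symmetric])
    have PA: "measure M (A \<inter> space M) = 1 - \<epsilon>\<^sub>0"
    proof -
      have e: "A \<inter> space M = space M - {\<omega> \<in> space M. f \<omega> / (1 + I \<omega>) < \<theta>\<^sub>a}"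
        by (auto simp: A_def)
      have "{\<omega> \<in> space M. f \<omega> / (1 + I \<omega>) < \<theta>\<^sub>a} \<in> sets M" using fm Im by measurable
      then show ?thesis unfolding e using P.prob_compl assms(16) by simp
    qed
    have PB: "measure M (B \<inter> space M) = 1 - \<epsilon>\<^sub>0"
    proof -
      have e: "B \<inter> space M = space M - {\<omega> \<in> space M. f \<omega> / (1 + \<Gamma>) < \<theta>\<^sub>p}"
        by (auto simp: B_def c_def)
      have "{\<omega> \<in> space M. f \<omega> / (1 + \<Gamma>) < \<theta>\<^sub>p} \<in> sets M" using fm by measurable
      then show ?thesis unfolding e using P.prob_compl assms(18) by simp
    qed
    have Ri: "integrable M R" unfolding R_def using Ai Bi Wpi Di by auto
    have "integral\<^sup>L M R = s * (1 - \<epsilon>\<^sub>0) + integral\<^sup>L M Wp - s * (1 - \<epsilon>\<^sub>0) + 0"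
      unfolding R_def using Ai Bi Wpi Di PA PB D0
      by (simp add: Bochner_Integration.integral_add Bochner_Integration.integral_diff)
    then have ER: "integral\<^sup>L M R = integral\<^sup>L M Wp" by simp
    have "AE \<omega> in M. Wa \<omega> \<le> R \<omega>"
      using assms(4,9)
    proof eventually_elim
      case (elim \<omega>)
      have y: "1 + I \<omega> > 0" using elim by simp
      let ?x = "f \<omega>" and ?y = "1 + I \<omega>"
      have e1: "Wa \<omega> = ?y / ?x * (if \<theta>\<^sub>a \<le> ?x / ?y then 1 else 0)"
        by (simp add: Wa_def indicator_def)
      have e2: "R \<omega> = s * (if \<theta>\<^sub>a \<le> ?x / ?y then 1 else 0) + c / ?x * (if \<theta>\<^sub>p \<le> ?x / c then 1 else 0)
     - s * (if \<theta>\<^sub>p \<le> ?x / c then 1 else 0) + (if ?x > 0 \<and> c / ?x < s then 1 / ?x else 0) * (?y - c)"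
        by (simp add: R_def Wp_def A_def B_def h_def indicator_def c_def)
      show ?case
        using pw[OF elim(1) y cpos True s_def, of \<theta>\<^sub>p] e1 e2 by linarith
    qed
    then have "integral\<^sup>L M Wa \<le> integral\<^sup>L M R"
      using Wai Ri by (intro integral_mono_AE) auto
    with ER show ?thesis by simp
  next
    case False
    then have ta: "\<theta>\<^sub>a = 0" using assms(15) by simp
    have "AE \<omega> in M. \<not> f \<omega> / (1 + I \<omega>) < \<theta>\<^sub>a"
      using assms(4,9)
    proof eventually_elim
      case (elim \<omega>)
      have "0 \<le> f \<omega> / (1 + I \<omega>)" using elim by (intro divide_nonneg_nonneg) auto
      then show ?case by (simp add: ta)
    qed
    then have "\<P>(\<omega> in M. f \<omega> / (1 + I \<omega>) < \<theta>\<^sub>a) = 0" by (rule P.prob_eq_0_AE)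
    then have e0: "\<epsilon>\<^sub>0 = 0" using assms(16) by linarith
    have Bs: "{\<omega> \<in> space M. f \<omega> / (1 + \<Gamma>) < \<theta>\<^sub>p} \<in> sets M" using fm by measurable
    have "AE \<omega> in M. \<omega> \<notin> {\<omega> \<in> space M. f \<omega> / (1 + \<Gamma>) < \<theta>\<^sub>p}"
      using P.prob_eq_0[OF Bs] assms(18) e0 by simp
    then have AEp: "AE \<omega> in M. Wp \<omega> = c / f \<omega>"
      using AE_space by eventually_elim (auto simp: Wp_def c_def indicator_def)
    have cfm: "(\<lambda>\<omega>. c / f \<omega>) \<in> borel_measurable M" using fm by measurable
    have cfi: "integrable M (\<lambda>\<omega>. c / f \<omega>)" by (rule integrable_cong_AE_imp[OF Wpi cfm AEp])
    have eq: "(\<lambda>\<omega>. 1 / f \<omega>) = (\<lambda>\<omega>. (1 / c) * (c / f \<omega>))" using cpos by auto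
    have "integrable M (\<lambda>\<omega>. (1 / c) * (c / f \<omega>))" using cfi by (rule integrable_mult_right)
    then have hi: "integrable M (\<lambda>\<omega>. (\<lambda>x. 1 / x) (f \<omega>))" unfolding eq[symmetric] by simp
    have hm: "(\<lambda>x::real. 1 / x) \<in> borel_measurable borel" by measurable
    have Di: "integrable M (\<lambda>\<omega>. 1 / f \<omega> * (I \<omega> - \<Gamma>))"
      and D0: "integral\<^sup>L M (\<lambda>\<omega>. 1 / f \<omega> * (I \<omega> - \<Gamma>)) = 0"
      using indep_zero[OF assms(1,10) hm hi assms(11,12)] by auto
    have "AE \<omega> in M. Wa \<omega> = c / f \<omega> + 1 / f \<omega> * (I \<omega> - \<Gamma>)"
      using assms(4,9)
    proof eventually_elim
      case (elim \<omega>)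
      have "Wa \<omega> = (1 + I \<omega>) / f \<omega>" using elim by (simp add: Wa_def ta indicator_def)
      also have "\<dots> = c / f \<omega> + 1 / f \<omega> * (I \<omega> - \<Gamma>)" using elim by (simp add: c_def field_simps)
      finally show ?case .
    qed
    then have "integral\<^sup>L M Wa = integral\<^sup>L M (\<lambda>\<omega>. c / f \<omega> + 1 / f \<omega> * (I \<omega> - \<Gamma>))"
      using Wai Di cfi by (intro integral_cong_AE) auto
    also have "\<dots> = integral\<^sup>L M (\<lambda>\<omega>. c / f \<omega>)"
      using cfi Di D0 by (simp add: Bochner_Integration.integral_add)
    also have "\<dots> = integral\<^sup>L M Wp"
      using AEp Wpi cfm by (intro integral_cong_AE) auto
    finally show ?thesis by simp
  qed
  have ga: "\<gamma>\<^sub>a = Q / integral\<^sup>L M Wa" using Ea EWa by (simp add: field_simps)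
  have gp: "\<gamma>\<^sub>p = Q / integral\<^sup>L M Wp" using Ep EWp by (simp add: field_simps)
  have "\<gamma>\<^sub>p \<le> \<gamma>\<^sub>a" unfolding ga gp using main EWa assms(2)
    by (intro divide_left_mono) auto
  moreover have "\<gamma>\<^sub>p > 0" using gp EWp assms(2) by simp
  ultimately show ?thesis by simp
qed

end
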